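(* Let $v$ be a pure bargaining game on $N$, i.e., $v(S)=0$ for all $S\ne N$, and let $n=|N|$. Let $i\in N$ and let $v_i$ be the component game (the unique $v_i\in\ell^2(V)$ with $v_i(\emptyset)=0$ and $\mathrm{d}v_i=P\mathrm{d}_iv$). Then for every $S\subset N\setminus\{i\}$, $$v_i(S\cup\{i\}) = \frac{1}{n2^n}\left(1+\frac{\binom{n}{0}+\cdots+\binom{n}{|S|}}{\binom{n-1}{|S|}}\right)v(N),\qquad v_i(S) = \frac{1}{n2^n}\left(1-\frac{\binom{n}{0}+\cdots+\binom{n}{|S|}}{\binom{n-1}{|S|}}\right)v(N).$$
   Context: Let $N$ be a finite set of players. A game is a function $v\colon 2^N\to\mathbb{R}$ with $v(\emptyset)=0$. The hypercube graph $G=(V,E)$ has $V=2^N$ and oriented edges $E=\{(S,S\cup\{i\}) : i\in N,\ S\subset N\setminus\{i\}\}$. $\ell^2(V)$ and $\ell^2(E)$ are the spaces of real functions on $V$ and $E$ with the standard inner products $\sum_{S}u(S)w(S)$ and $\sum_{e}f(e)g(e)$. $\mathrm{d}\colon \ell^2(V)\to\ell^2(E)$ is $\mathrm{d}u(S,S\cup\{i\}) = u(S\cup\{i\})-u(S)$. For $i\in N$, $\mathrm{d}_i\colon\ell^2(V)\to\ell^2(E)$ is defined by $\mathrm{d}_i u(S,S\cup\{j\}) = u(S\cup\{i\})-u(S)$ if $j=i$ and $0$ if $j\ne i$. $P$ is the orthogonal projection of $\ell^2(E)$ onto the range $\mathcal{R}(\mathrm{d})$. *)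

theory Defs
  imports Complex_Main
begin

(* Vertices of the hypercube: subsets of N.  l2(V) = real functions on 2^N, represented
   as functions 'a set => real that vanish outside Pow N. *)
definition l2V :: "'a set \<Rightarrow> ('a set \<Rightarrow> real) set" where
  "l2V N = {u. \<forall>S. \<not> S \<subseteq> N \<longrightarrow> u S = 0}"

definition hedges :: "'a set \<Rightarrow> ('a set \<times> 'a set) set" where
  "hedges N = {(S, insert i S) | S i. i \<in> N \<and> S \<subseteq> N - {i}}"

definition l2E :: "'a set \<Rightarrow> ('a set \<times> 'a set \<Rightarrow> real) set" where
  "l2E N = {f. \<forall>e. e \<notin> hedges N \<longrightarrow> f e = 0}"

definition innerE :: "'a set \<Rightarrow> ('a set \<times> 'a set \<Rightarrow> real) \<Rightarrow> ('a set \<times> 'a set \<Rightarrow> real) \<Rightarrow> real" where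
  "innerE N f g = (\<Sum>e\<in>hedges N. f e * g e)"

definition grad :: "'a set \<Rightarrow> ('a set \<Rightarrow> real) \<Rightarrow> ('a set \<times> 'a set \<Rightarrow> real)" where
  "grad N u = (\<lambda>e. if e \<in> hedges N then u (snd e) - u (fst e) else 0)"

definition grad_i :: "'a set \<Rightarrow> 'a \<Rightarrow> ('a set \<Rightarrow> real) \<Rightarrow> ('a set \<times> 'a set \<Rightarrow> real)" where
  "grad_i N i u = (\<lambda>e. if e \<in> hedges N \<and> snd e = insert i (fst e) \<and> i \<notin> fst e
                        then u (insert i (fst e)) - u (fst e) else 0)"

definition range_grad :: "'a set \<Rightarrow> ('a set \<times> 'a set \<Rightarrow> real) set" where
  "range_grad N = grad N ` l2V N"

definition projP :: "'a set \<Rightarrow> ('a set \<times> 'a set \<Rightarrow> real) \<Rightarrow> ('a set \<times> 'a set \<Rightarrow> real)" where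
  "projP N f = (THE g. g \<in> range_grad N \<and>
                   (\<forall>h \<in> range_grad N. innerE N (\<lambda>e. f e - g e) h = 0))"

definition component_game :: "'a set \<Rightarrow> ('a set \<Rightarrow> real) \<Rightarrow> 'a \<Rightarrow> ('a set \<Rightarrow> real)" where
  "component_game N v i = (THE w. w \<in> l2V N \<and> w {} = 0 \<and> grad N w = projP N (grad_i N i v))"

end

theory Submission
  imports Defs
begin


lemma binA: "0 < s \<Longrightarrow> s \<le> m \<Longrightarrow> s * (m choose s) = (m - s + 1) * (m choose (s - 1))"
proof -
  assume "0 < s" "s \<le> m"
  then obtain k where k: "s = Suc k" by (cases s) auto
  have "s * (m choose s) = m * ((m-1) choose k)" using k binomial_absorption by simp
  also have "\<dots> = (m - k) * (m choose k)" using binomial_absorb_comp by metis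
  moreover have "m - s + 1 = m - k" using k \<open>s \<le> m\<close> by simp
  ultimately show ?thesis using k by simp
qed

lemma binB: "s < m \<Longrightarrow> (m - s) * (m choose s) = (s+1) * (m choose (s + 1))"
  by (metis binomial_absorb_comp Suc_eq_plus1 binomial_absorption)

definition aa :: "nat \<Rightarrow> nat \<Rightarrow> real" where
  "aa n s = real (\<Sum>k\<le>s. n choose k) / real (n - 1 choose s)"

lemma aa_ident:
  assumes "s \<le> m"
  shows "real (Suc m + 1) * aa (Suc m) s - real s * aa (Suc m) (s-1) - real (m - s) * aa (Suc m) (s+1)
     = (if s = m then real (Suc m) * 2 ^ Suc m else 0)"
proof -
  define B where "B = (\<lambda>t. real (\<Sum>k\<le>t. Suc m choose k))"
  define C where "C = (\<lambda>t. real (m choose t))"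
  have Cpos: "C t > 0" if "t \<le> m" for t using that by (simp add: C_def)
  have aaB: "aa (Suc m) t = B t / C t" for t by (simp add: aa_def B_def C_def)
  have T1: "real s * aa (Suc m) (s-1) = real (Suc m - s) * (B s - real (Suc m choose s)) / C s"
  proof (cases s)
    case 0 then show ?thesis by (simp add: B_def)
  next
    case (Suc k)
    have e1: "real s * C s = real (m - s + 1) * C (s - 1)"
      using binA[of s m] Suc assms unfolding C_def by (metis of_nat_mult zero_less_Suc)
    have e2: "B (s - 1) = B s - real (Suc m choose s)" using Suc by (simp add: B_def)
    have "real s * aa (Suc m) (s-1) = real s * B (s-1) / C (s-1)" by (simp add: aaB)
    also have "\<dots> = real (m - s + 1) * B (s-1) / C s"
    proof -
      have p1: "C s > 0" "C (s-1) > 0" using Cpos assms by auto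
      have "real s * B(s-1) * C s = real(m-s+1) * B(s-1) * C(s-1)" using e1
        by (metis mult.commute mult.left_commute)
      thus ?thesis using p1 by (simp add: frac_eq_eq)
    qed
    finally show ?thesis using e2 assms by (simp add: Suc_diff_le)
  qed
  show ?thesis
  proof (cases "s = m")
    case True
    have Bm: "B m = 2 ^ Suc m - 1"
    proof -
      have "(\<Sum>k\<le>Suc m. Suc m choose k) = 2 ^ Suc m" by (rule choose_row_sum)
      hence "(\<Sum>k\<le>m. Suc m choose k) + 1 = 2 ^ Suc m" by simp
      hence "real (\<Sum>k\<le>m. Suc m choose k) + 1 = 2 ^ Suc m"
        by (metis of_nat_1 of_nat_add of_nat_numeral of_nat_power)
      thus ?thesis by (simp add: B_def)
    qed
    have Cm: "C m = 1" by (simp add: C_def)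
    have sc: "Suc m choose m = Suc m" by (rule binomial_Suc_n)
    have t1: "real s * aa (Suc m) (s-1) = B m - real (Suc m)" using T1 True Cm sc by simp
    have "real (Suc m + 1) * aa (Suc m) s - real s * aa (Suc m) (s-1) - real (m - s) * aa (Suc m) (s+1)
       = real (Suc m + 1) * B m - (B m - real (Suc m))" using t1 True Cm by (simp add: aaB)
    also have "\<dots> = real (Suc m) * (B m + 1)" by (simp add: algebra_simps)
    also have "\<dots> = real (Suc m) * 2 ^ Suc m" using Bm by simp
    finally show ?thesis using True by simp
  next
    case False
    hence lt: "s < m" using assms by simp
    have e1: "real (m - s) * C s = real (s + 1) * C (s + 1)"
      using binB[OF lt] unfolding C_def by (metis of_nat_mult)
    have T2: "real (m - s) * aa (Suc m) (s+1) = real (s+1) * (B s + real (Suc m choose (s+1))) / C s"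
    proof -
      have "real (m - s) * aa (Suc m) (s+1) = real (m - s) * B (s+1) / C (s+1)" by (simp add: aaB)
      also have "\<dots> = real (s+1) * B (s+1) / C s"
      proof -
        have p1: "C s > 0" "C (s+1) > 0" using Cpos lt by auto
        have "real (m-s) * B(s+1) * C s = real(s+1) * B(s+1) * C(s+1)" using e1
          by (metis mult.commute mult.left_commute)
        thus ?thesis using p1 by (simp add: frac_eq_eq)
      qed
      finally show ?thesis by (simp add: B_def)
    qed
    have e3: "real (s+1) * real (Suc m choose (s+1)) = real (Suc m - s) * real (Suc m choose s)"
      by (metis binomial_absorb_comp Suc_eq_plus1 binomial_absorption of_nat_mult)
    have "real (Suc m + 1) * aa (Suc m) s - real s * aa (Suc m) (s-1) - real (m - s) * aa (Suc m) (s+1)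
      = (real (Suc m + 1) * B s - real (Suc m - s) * (B s - real (Suc m choose s))
          - real (s+1) * (B s + real (Suc m choose (s+1)))) / C s"
      using T1 T2 Cpos[of s] assms by (simp add: aaB field_simps)
    also have "\<dots> = 0" using e3 lt by (simp add: of_nat_diff algebra_simps)
    finally show ?thesis using False by simp
  qed
qed


lemma hedges_fin: "finite N \<Longrightarrow> finite (hedges N)"
proof -
  assume f: "finite N"
  have "hedges N \<subseteq> Pow N \<times> Pow N" by (auto simp: hedges_def)
  thus ?thesis using f by (meson finite_Pow_iff finite_SigmaI finite_subset)
qed

lemma hedges_up: "hedges N = (\<lambda>(T,j). (T, insert j T)) ` (SIGMA T:Pow N. N - T)"
  unfolding hedges_def by (auto simp: image_iff)

lemma hedges_down: "hedges N = (\<lambda>(T,j). (T - {j}, T)) ` (SIGMA T:Pow N. T)"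
proof
  show "hedges N \<subseteq> (\<lambda>(T,j). (T - {j}, T)) ` (SIGMA T:Pow N. T)"
  proof
    fix e assume "e \<in> hedges N"
    then obtain S i where e: "e = (S, insert i S)" "i \<in> N" "S \<subseteq> N - {i}" by (auto simp: hedges_def)
    hence "e = (\<lambda>(T,j). (T - {j}, T)) (insert i S, i)" by auto
    moreover have "(insert i S, i) \<in> (SIGMA T:Pow N. T)" using e by auto
    ultimately show "e \<in> (\<lambda>(T,j). (T - {j}, T)) ` (SIGMA T:Pow N. T)" by blast
  qed
next
  show "(\<lambda>(T,j). (T - {j}, T)) ` (SIGMA T:Pow N. T) \<subseteq> hedges N"
  proof
    fix e assume "e \<in> (\<lambda>(T,j). (T - {j}, T)) ` (SIGMA T:Pow N. T)"
    then obtain T j where "T \<subseteq> N" "j \<in> T" "e = (T - {j}, T)" by auto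
    thus "e \<in> hedges N" unfolding hedges_def
      by (intro CollectI exI[of _ "T - {j}"] exI[of _ j]) (auto simp: insert_absorb)
  qed
qed

lemma sum_up:
  assumes "finite N"
  shows "(\<Sum>e\<in>hedges N. g e) = (\<Sum>T\<in>Pow N. \<Sum>j\<in>N - T. g (T, insert j T))"
proof -
  have inj: "inj_on (\<lambda>(T,j). (T, insert j T)) (SIGMA T:Pow N. N - T)"
    by (auto simp: inj_on_def)
  have "(\<Sum>e\<in>hedges N. g e) = (\<Sum>x\<in>(SIGMA T:Pow N. N - T). g ((\<lambda>(T,j). (T, insert j T)) x))"
    unfolding hedges_up by (rule sum.reindex[OF inj, unfolded comp_def])
  also have "\<dots> = (\<Sum>T\<in>Pow N. \<Sum>j\<in>N - T. g (T, insert j T))"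
    using assms by (subst sum.Sigma) (auto simp: case_prod_unfold)
  finally show ?thesis .
qed

lemma sum_down:
  assumes "finite N"
  shows "(\<Sum>e\<in>hedges N. g e) = (\<Sum>T\<in>Pow N. \<Sum>j\<in>T. g (T - {j}, T))"
proof -
  have inj: "inj_on (\<lambda>(T,j). (T - {j}, T)) (SIGMA T:Pow N. T)"
    by (auto simp: inj_on_def)
  have "(\<Sum>e\<in>hedges N. g e) = (\<Sum>x\<in>(SIGMA T:Pow N. T). g ((\<lambda>(T,j). (T - {j}, T)) x))"
    unfolding hedges_down by (rule sum.reindex[OF inj, unfolded comp_def])
  also have "\<dots> = (\<Sum>T\<in>Pow N. \<Sum>j\<in>T. g (T - {j}, T))"
    using assms by (subst sum.Sigma) (auto simp: case_prod_unfold intro: finite_subset)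
  finally show ?thesis .
qed

definition divg :: "'a set \<Rightarrow> ('a set \<times> 'a set \<Rightarrow> real) \<Rightarrow> 'a set \<Rightarrow> real" where
  "divg N F T = (\<Sum>j\<in>T. F (T - {j}, T)) - (\<Sum>j\<in>N - T. F (T, insert j T))"

lemma inner_grad:
  assumes "finite N"
  shows "innerE N F (grad N u) = (\<Sum>T\<in>Pow N. u T * divg N F T)"
proof -
  have "innerE N F (grad N u) = (\<Sum>e\<in>hedges N. F e * u (snd e)) - (\<Sum>e\<in>hedges N. F e * u (fst e))"
    unfolding innerE_def grad_def by (simp add: sum_subtractf[symmetric] algebra_simps)
  also have "\<dots> = (\<Sum>T\<in>Pow N. \<Sum>j\<in>T. F (T - {j}, T) * u T) - (\<Sum>T\<in>Pow N. \<Sum>j\<in>N - T. F (T, insert j T) * u T)"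
    using sum_down[OF assms, of "\<lambda>e. F e * u (snd e)"] sum_up[OF assms, of "\<lambda>e. F e * u (fst e)"] by simp
  also have "\<dots> = (\<Sum>T\<in>Pow N. u T * divg N F T)"
    unfolding divg_def by (simp add: sum_subtractf[symmetric] sum_distrib_left sum_distrib_right algebra_simps)
  finally show ?thesis .
qed

lemma projP_eq:
  assumes fin: "finite N" and g: "g \<in> range_grad N"
    and orth: "\<forall>h\<in>range_grad N. innerE N (\<lambda>e. f e - g e) h = 0"
  shows "projP N f = g"
  unfolding projP_def
proof (rule the_equality)
  show "g \<in> range_grad N \<and> (\<forall>h\<in>range_grad N. innerE N (\<lambda>e. f e - g e) h = 0)" using g orth by blast
  fix g' assume H: "g' \<in> range_grad N \<and> (\<forall>h\<in>range_grad N. innerE N (\<lambda>e. f e - g' e) h = 0)"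
  obtain u where u: "u \<in> l2V N" "g = grad N u" using g by (auto simp: range_grad_def)
  obtain u' where u': "u' \<in> l2V N" "g' = grad N u'" using H by (auto simp: range_grad_def)
  let ?d = "grad N (\<lambda>T. u' T - u T)"
  have dr: "?d \<in> range_grad N" using u u' unfolding range_grad_def l2V_def by auto
  have deq: "?d = (\<lambda>e. g' e - g e)" using u u' by (auto simp: grad_def)
  have i1: "innerE N (\<lambda>e. f e - g e) ?d = 0" using orth dr by blast
  have i2: "innerE N (\<lambda>e. f e - g' e) ?d = 0" using H dr by blast
  have "innerE N (\<lambda>e. f e - g e) ?d - innerE N (\<lambda>e. f e - g' e) ?d
      = (\<Sum>e\<in>hedges N. (g' e - g e)^2)"
    unfolding innerE_def deq by (simp add: sum_subtractf[symmetric] power2_eq_square algebra_simps)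
  hence "(\<Sum>e\<in>hedges N. (g' e - g e)^2) = 0" using i1 i2 by simp
  hence z: "\<forall>e\<in>hedges N. g' e - g e = 0"
    using sum_nonneg_eq_0_iff[OF hedges_fin[OF fin], of "\<lambda>e. (g' e - g e)^2"] by simp
  show "g' = g"
  proof
    fix e show "g' e = g e"
      using z u u' by (cases "e \<in> hedges N") (auto simp: grad_def)
  qed
qed

lemma grad_inj:
  assumes fin: "finite N" and w: "w \<in> l2V N" and w': "w' \<in> l2V N"
    and z: "w {} = w' {}" and gr: "grad N w = grad N w'"
  shows "w = w'"
proof
  fix T
  show "w T = w' T"
  proof (cases "T \<subseteq> N")
    case False thus ?thesis using w w' by (auto simp: l2V_def)
  next
    case True
    have "finite T" using True fin finite_subset by blast
    thus ?thesis using True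
    proof (induction T rule: finite_induct)
      case empty thus ?case using z by simp
    next
      case (insert x F)
      have e: "(F, insert x F) \<in> hedges N" using insert.prems insert.hyps unfolding hedges_def by blast
      have "grad N w (F, insert x F) = grad N w' (F, insert x F)" using gr by simp
      hence "w (insert x F) - w F = w' (insert x F) - w' F" using e by (simp add: grad_def)
      thus ?case using insert by auto
    qed
  qed
qed

lemma comp_eq:
  assumes fin: "finite N" and w: "w \<in> l2V N" and z: "w {} = 0"
    and gr: "grad N w = projP N (grad_i N i v)"
  shows "component_game N v i = w"
  unfolding component_game_def
proof (rule the_equality)
  show "w \<in> l2V N \<and> w {} = 0 \<and> grad N w = projP N (grad_i N i v)" using assms by blast
  fix w' assume "w' \<in> l2V N \<and> w' {} = 0 \<and> grad N w' = projP N (grad_i N i v)"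
  thus "w' = w" using grad_inj[OF fin, of w' w] w z gr by auto
qed



lemma hedge_down_mem: "T \<subseteq> N \<Longrightarrow> j \<in> T \<Longrightarrow> (T - {j}, T) \<in> hedges N"
  unfolding hedges_def by (intro CollectI exI[of _ "T - {j}"] exI[of _ j]) (auto simp: insert_absorb)

lemma hedge_up_mem: "T \<subseteq> N \<Longrightarrow> j \<in> N - T \<Longrightarrow> (T, insert j T) \<in> hedges N"
  unfolding hedges_def by blast

lemma D1:
  assumes fin: "finite N" and T: "T \<subseteq> N" and iN: "i \<in> N"
    and pb: "\<forall>T. T \<subseteq> N \<and> T \<noteq> N \<longrightarrow> v T = 0"
  shows "divg N (grad_i N i v) T =
     (if i \<in> T then (if T = N then v N else 0) else (if insert i T = N then - v N else 0))"
proof -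
  have a: "(\<Sum>j\<in>T. grad_i N i v (T - {j}, T)) = (\<Sum>j\<in>T. if j = i then v T - v (T - {i}) else 0)"
  proof (rule sum.cong[OF refl])
    fix j assume j: "j \<in> T"
    have h: "(T - {j}, T) \<in> hedges N" using hedge_down_mem[OF T] j by blast
    show "grad_i N i v (T - {j}, T) = (if j = i then v T - v (T - {i}) else 0)"
    proof (cases "j = i")
      case True
      have e: "insert i (T - {i}) = T" using j True by auto
      show ?thesis using h True e by (simp add: grad_i_def)
    next
      case False
      have c: "\<not> ((T - {j}, T) \<in> hedges N \<and> snd (T - {j}, T) = insert i (fst (T - {j}, T)) \<and> i \<notin> fst (T - {j}, T))"
        using j False by auto
      have "grad_i N i v (T - {j}, T) = 0" unfolding grad_i_def by (rule if_not_P[OF c])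
      thus ?thesis using False by simp
    qed
  qed
  have b: "(\<Sum>j\<in>N - T. grad_i N i v (T, insert j T)) = (\<Sum>j\<in>N - T. if j = i then v (insert i T) - v T else 0)"
  proof (rule sum.cong[OF refl])
    fix j assume j: "j \<in> N - T"
    have h: "(T, insert j T) \<in> hedges N" using hedge_up_mem[OF T] j by blast
    show "grad_i N i v (T, insert j T) = (if j = i then v (insert i T) - v T else 0)"
    proof (cases "j = i")
      case True
      show ?thesis using h True j by (simp add: grad_i_def)
    next
      case False
      have c: "\<not> ((T, insert j T) \<in> hedges N \<and> snd (T, insert j T) = insert i (fst (T, insert j T)) \<and> i \<notin> fst (T, insert j T))"
        using j False by auto
      have "grad_i N i v (T, insert j T) = 0" unfolding grad_i_def by (rule if_not_P[OF c])
      thus ?thesis using False by simp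
    qed
  qed
  have fT: "finite T" using fin T finite_subset by blast
  have s1: "(\<Sum>j\<in>T. if j = i then v T - v (T - {i}) else 0) = (if i \<in> T then v T - v (T - {i}) else 0)"
    using fT by (simp add: sum.delta)
  have s2: "(\<Sum>j\<in>N - T. if j = i then v (insert i T) - v T else 0) = (if i \<in> N - T then v (insert i T) - v T else 0)"
    using fin by (simp add: sum.delta)
  have vT: "v T = (if T = N then v N else 0)" using pb[rule_format, of T] T by simp
  show ?thesis
  proof (cases "i \<in> T")
    case True
    have "T - {i} \<noteq> N" using iN by auto
    moreover have "T - {i} \<subseteq> N" using T by blast
    ultimately have "v (T - {i}) = 0" using pb[rule_format, of "T - {i}"] by blast
    thus ?thesis unfolding divg_def a b s1 s2 using True vT by simp
  next
    case False
    have "T \<noteq> N" using iN False by auto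
    hence "v T = 0" using vT by simp
    moreover have "insert i T \<subseteq> N" using T iN by blast
    hence "v (insert i T) = (if insert i T = N then v N else 0)" using pb[rule_format, of "insert i T"] by simp
    ultimately show ?thesis unfolding divg_def a b s1 s2 using False iN by simp
  qed
qed

lemma D2:
  assumes fin: "finite N" and T: "T \<subseteq> N"
  shows "divg N (grad N W) T = real (card N) * W T - (\<Sum>j\<in>T. W (T - {j})) - (\<Sum>j\<in>N - T. W (insert j T))"
proof -
  have fT: "finite T" using fin T finite_subset by blast
  have a: "(\<Sum>j\<in>T. grad N W (T - {j}, T)) = (\<Sum>j\<in>T. W T - W (T - {j}))"
  proof (rule sum.cong[OF refl])
    fix j assume j: "j \<in> T"
    have h: "(T - {j}, T) \<in> hedges N" using hedge_down_mem[OF T] j by blast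
    show "grad N W (T - {j}, T) = W T - W (T - {j})" using h by (simp add: grad_def)
  qed
  have b: "(\<Sum>j\<in>N - T. grad N W (T, insert j T)) = (\<Sum>j\<in>N - T. W (insert j T) - W T)"
  proof (rule sum.cong[OF refl])
    fix j assume j: "j \<in> N - T"
    have h: "(T, insert j T) \<in> hedges N" using hedge_up_mem[OF T] j by blast
    show "grad N W (T, insert j T) = W (insert j T) - W T" using h by (simp add: grad_def)
  qed
  have c: "card N = card T + card (N - T)"
  proof -
    have "card T \<le> card N" by (rule card_mono[OF fin T])
    thus ?thesis using fT T by (simp add: card_Diff_subset)
  qed
  show ?thesis unfolding divg_def a b using c
    by (simp add: sum_subtractf algebra_simps)
qed



lemma arith1:
  fixes nn ss kk c A B D :: real
  assumes "nn = 1 + ss + kk"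
  shows "nn * (c * (1 + A)) - (c * (1 - A) + ss * (c * (1 + B))) - kk * (c * (1 + D))
       = c * ((nn + 1) * A - ss * B - kk * D)"
  using assms by (simp add: algebra_simps)

lemma arith2:
  fixes nn ss kk c A B D :: real
  assumes "nn = 1 + ss + kk"
  shows "nn * (c * (1 - A)) - ss * (c * (1 - B)) - (c * (1 + A) + kk * (c * (1 - D)))
       = - c * ((nn + 1) * A - ss * B - kk * D)"
  using assms by (simp add: algebra_simps)

theorem theorem3p11:
  fixes N :: "'a set" and v :: "'a set \<Rightarrow> real" and i :: 'a and S :: "'a set"
  assumes "finite N"
    and "v {} = 0"
    and "\<forall>T. T \<subseteq> N \<and> T \<noteq> N \<longrightarrow> v T = 0"
    and "i \<in> N"
    and "S \<subseteq> N - {i}"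
  shows "component_game N v i (insert i S) =
           1 / (real (card N) * 2 ^ card N) *
           (1 + real (\<Sum>k\<le>card S. card N choose k) / real (card N - 1 choose card S)) * v N \<and>
         component_game N v i S =
           1 / (real (card N) * 2 ^ card N) *
           (1 - real (\<Sum>k\<le>card S. card N choose k) / real (card N - 1 choose card S)) * v N"
proof -
  note fin = assms(1) and pb = assms(3) and iN = assms(4)
  define n where "n = card N"
  obtain m where nm: "n = Suc m" using iN fin n_def by (metis card_0_eq empty_iff not0_implies_Suc)
  have cardNi: "card (N - {i}) = m" using nm n_def fin iN by simp
  define c where "c = v N / (real n * 2 ^ n)"
  have cn: "c * (real n * 2 ^ n) = v N" using nm by (simp add: c_def)
  define W where "W = (\<lambda>T. if T \<subseteq> N then (if i \<in> T then c * (1 + aa n (card (T - {i})))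
                           else c * (1 - aa n (card T))) else 0)"
  have Wl2: "W \<in> l2V N" by (simp add: W_def l2V_def)
  have W0: "W {} = 0" by (simp add: W_def aa_def)
  have key: "divg N (grad_i N i v) T = divg N (grad N W) T" if T: "T \<subseteq> N" for T
  proof -
    have fT: "finite T" using fin T finite_subset by blast
    note ID = aa_ident[of _ m, folded nm]
    show ?thesis
    proof (cases "i \<in> T")
      case True
      define s where "s = card (T - {i})"
      have sm: "s \<le> m" unfolding s_def using T cardNi fin by (metis Diff_mono card_mono finite_Diff order_refl)
      have Tc: "card T = Suc s"
      proof -
        have "card T > 0" using True fT card_gt_0_iff by blast
        thus ?thesis using True fT s_def by simp
      qed
      have TN: "T = N \<longleftrightarrow> s = m"
      proof
        assume "T = N" thus "s = m" using s_def cardNi by simp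
      next
        assume "s = m"
        hence "card T = card N" using Tc nm n_def by simp
        thus "T = N" using T fin card_subset_eq by blast
      qed
      have WT: "W T = c * (1 + aa n s)" using T True by (simp add: W_def s_def)
      have s1: "(\<Sum>j\<in>T. W (T - {j})) = W (T - {i}) + (\<Sum>j\<in>T - {i}. W (T - {j}))"
        using fT True by (simp add: sum.remove)
      have s1a: "W (T - {i}) = c * (1 - aa n s)"
      proof -
        have "T - {i} \<subseteq> N" using T by auto
        thus ?thesis by (simp add: W_def s_def)
      qed
      have s1b: "(\<Sum>j\<in>T - {i}. W (T - {j})) = real s * (c * (1 + aa n (s - 1)))"
      proof -
        have "(\<Sum>j\<in>T - {i}. W (T - {j})) = (\<Sum>j\<in>T - {i}. c * (1 + aa n (s - 1)))"
        proof (rule sum.cong[OF refl])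
          fix j assume j: "j \<in> T - {i}"
          have "T - {j} - {i} = (T - {i}) - {j}" by auto
          hence "card (T - {j} - {i}) = s - 1" using j fT s_def by simp
          moreover have "T - {j} \<subseteq> N" "i \<in> T - {j}" using T j True by auto
          ultimately show "W (T - {j}) = c * (1 + aa n (s - 1))" by (simp add: W_def)
        qed
        thus ?thesis using s_def by simp
      qed
      have s2: "(\<Sum>j\<in>N - T. W (insert j T)) = real (m - s) * (c * (1 + aa n (s + 1)))"
      proof -
        have "(\<Sum>j\<in>N - T. W (insert j T)) = (\<Sum>j\<in>N - T. c * (1 + aa n (s + 1)))"
        proof (rule sum.cong[OF refl])
          fix j assume j: "j \<in> N - T"
          have "insert j T - {i} = insert j (T - {i})" using j True by auto
          hence "card (insert j T - {i}) = s + 1" using j fT s_def by simp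
          moreover have "insert j T \<subseteq> N" "i \<in> insert j T" using T j True by auto
          ultimately show "W (insert j T) = c * (1 + aa n (s + 1))" by (simp add: W_def)
        qed
        moreover have "card (N - T) = m - s" using fin T fT Tc nm n_def by (simp add: card_Diff_subset)
        ultimately show ?thesis by simp
      qed
      have X: "(real n + 1) * aa n s - real s * aa n (s-1) - real (m - s) * aa n (s+1)
          = (if s = m then real n * 2 ^ n else 0)"
      proof -
        have "real (n + 1) * aa n s - real s * aa n (s-1) - real (m - s) * aa n (s+1)
          = (if s = m then real n * 2 ^ n else 0)" by (rule ID[OF sm])
        thus ?thesis by (simp only: of_nat_add of_nat_1)
      qed
      have Z: "real n = 1 + real s + real (m - s)" using sm nm by (simp add: of_nat_diff)
      have "divg N (grad N W) T = real n * (c * (1 + aa n s)) - (c * (1 - aa n s) + real s * (c * (1 + aa n (s - 1))))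
            - real (m - s) * (c * (1 + aa n (s + 1)))"
        using D2[OF fin T, of W] WT s1 s1a s1b s2 n_def by simp
      also have "\<dots> = c * ((real n + 1) * aa n s - real s * aa n (s-1) - real (m - s) * aa n (s+1))"
        by (rule arith1[OF Z])
      also have "\<dots> = (if s = m then v N else 0)"
        unfolding X using cn by simp
      also have "\<dots> = divg N (grad_i N i v) T"
        using D1[OF fin T iN pb] True TN by simp
      finally show ?thesis by simp
    next
      case False
      define s where "s = card T"
      have TNi: "T \<subseteq> N - {i}" using T False by auto
      have sm: "s \<le> m" unfolding s_def using TNi cardNi fin by (metis card_mono finite_Diff)
      have TN: "insert i T = N \<longleftrightarrow> s = m"
      proof
        assume "insert i T = N" thus "s = m" using s_def cardNi False by auto
      next
        assume "s = m"
        hence "card T = card (N - {i})" using cardNi s_def by simp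
        hence "T = N - {i}" using TNi fin card_subset_eq by (metis finite_Diff)
        thus "insert i T = N" using iN by auto
      qed
      have WT: "W T = c * (1 - aa n s)" using T False by (simp add: W_def s_def)
      have s1: "(\<Sum>j\<in>T. W (T - {j})) = real s * (c * (1 - aa n (s - 1)))"
      proof -
        have "(\<Sum>j\<in>T. W (T - {j})) = (\<Sum>j\<in>T. c * (1 - aa n (s - 1)))"
        proof (rule sum.cong[OF refl])
          fix j assume j: "j \<in> T"
          have "card (T - {j}) = s - 1" using j fT s_def by simp
          moreover have "T - {j} \<subseteq> N" "i \<notin> T - {j}" using T j False by auto
          ultimately show "W (T - {j}) = c * (1 - aa n (s - 1))" using False by (simp add: W_def)
        qed
        thus ?thesis using s_def by simp
      qed
      have iNT: "i \<in> N - T" using iN False by simp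
      have s2: "(\<Sum>j\<in>N - T. W (insert j T)) = W (insert i T) + (\<Sum>j\<in>N - T - {i}. W (insert j T))"
        using fin iNT by (simp add: sum.remove)
      have s2a: "W (insert i T) = c * (1 + aa n s)" using T iN False by (simp add: W_def s_def)
      have s2b: "(\<Sum>j\<in>N - T - {i}. W (insert j T)) = real (m - s) * (c * (1 - aa n (s + 1)))"
      proof -
        have "(\<Sum>j\<in>N - T - {i}. W (insert j T)) = (\<Sum>j\<in>N - T - {i}. c * (1 - aa n (s + 1)))"
        proof (rule sum.cong[OF refl])
          fix j assume j: "j \<in> N - T - {i}"
          have "card (insert j T) = s + 1" using j fT s_def by simp
          moreover have "insert j T \<subseteq> N" "i \<notin> insert j T" using T j False by auto
          ultimately show "W (insert j T) = c * (1 - aa n (s + 1))" using False by (simp add: W_def)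
        qed
        moreover have "card (N - T - {i}) = m - s"
        proof -
          have "N - T - {i} = (N - {i}) - T" by auto
          thus ?thesis using fin TNi cardNi s_def by (simp add: card_Diff_subset finite_subset)
        qed
        ultimately show ?thesis by simp
      qed
      have X: "(real n + 1) * aa n s - real s * aa n (s-1) - real (m - s) * aa n (s+1)
          = (if s = m then real n * 2 ^ n else 0)"
      proof -
        have "real (n + 1) * aa n s - real s * aa n (s-1) - real (m - s) * aa n (s+1)
          = (if s = m then real n * 2 ^ n else 0)" by (rule ID[OF sm])
        thus ?thesis by (simp only: of_nat_add of_nat_1)
      qed
      have Z: "real n = 1 + real s + real (m - s)" using sm nm by (simp add: of_nat_diff)
      have "divg N (grad N W) T = real n * (c * (1 - aa n s)) - real s * (c * (1 - aa n (s - 1)))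
            - (c * (1 + aa n s) + real (m - s) * (c * (1 - aa n (s + 1))))"
        using D2[OF fin T, of W] WT s1 s2 s2a s2b n_def by simp
      also have "\<dots> = - c * ((real n + 1) * aa n s - real s * aa n (s-1) - real (m - s) * aa n (s+1))"
        by (rule arith2[OF Z])
      also have "\<dots> = (if s = m then - v N else 0)"
        unfolding X using cn by simp
      also have "\<dots> = divg N (grad_i N i v) T"
        using D1[OF fin T iN pb] False TN by simp
      finally show ?thesis by simp
    qed
  qed
  have orth: "\<forall>h\<in>range_grad N. innerE N (\<lambda>e. grad_i N i v e - grad N W e) h = 0"
  proof
    fix h assume "h \<in> range_grad N"
    then obtain u where u: "h = grad N u" by (auto simp: range_grad_def)
    have "divg N (\<lambda>e. grad_i N i v e - grad N W e) T = 0" if "T \<in> Pow N" for T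
      using key[of T] that unfolding divg_def by (simp add: sum_subtractf)
    thus "innerE N (\<lambda>e. grad_i N i v e - grad N W e) h = 0"
      unfolding u inner_grad[OF fin] by simp
  qed
  have gr: "grad N W \<in> range_grad N" using Wl2 by (simp add: range_grad_def)
  have P: "projP N (grad_i N i v) = grad N W" by (rule projP_eq[OF fin gr orth])
  have CG: "component_game N v i = W" by (rule comp_eq[OF fin Wl2 W0 P[symmetric]])
  have iS: "i \<notin> S" "S \<subseteq> N" using assms(5) by auto
  have e1: "W (insert i S) = c * (1 + aa n (card S))" using iS iN by (simp add: W_def)
  have e2: "W S = c * (1 - aa n (card S))" using iS by (simp add: W_def)
  have gen: "\<And>a x b. a / x * b = 1 / x * b * (a::real)" by simp
  show ?thesis unfolding CG e1 e2 c_def aa_def n_def by (intro conjI; rule gen)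
qed

end
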